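(* Let $\phi:\mathbb{R}^m\to\mathbb{R}^n$ be a quadratic harmonic morphism. Then its complete lift $\Phi:\mathbb{R}^m\times\mathbb{R}^m\to\mathbb{R}^n$, $\Phi(x,y)=J\phi(x)\,y$ (the Jacobian matrix of $\phi$ at $x$ applied to the column vector $y$), is again a quadratic harmonic morphism.
   Context: A map $\psi:\mathbb{R}^N\to\mathbb{R}^n$ is quadratic if all its components are homogeneous polynomials of degree $2$. A smooth map $\psi:\mathbb{R}^N\to\mathbb{R}^n$ is a harmonic morphism if for every harmonic function $f$ defined on an open set $V\subset\mathbb{R}^n$ with $\psi^{-1}(V)\neq\emptyset$, the function $f\circ\psi$ is harmonic on $\psi^{-1}(V)$; equivalently, $\psi$ is harmonic (each component satisfies $\sum_i\partial^2\psi^k/\partial x_i^2=0$) and horizontally weakly conformal (there is a function $\lambda$ with $\sum_i\frac{\partial\psi^k}{\partial x_i}\frac{\partial\psi^l}{\partial x_i}=\lambda^2\delta_{kl}$ for all $k,l$). *)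

theory Defs
  imports "HOL-Analysis.Analysis"
begin

definition quadratic_map :: "('a::euclidean_space \<Rightarrow> 'b::euclidean_space) \<Rightarrow> bool" where
  "quadratic_map f \<longleftrightarrow>
     (\<forall>k\<in>Basis. \<exists>A :: 'a \<Rightarrow> 'a \<Rightarrow> real.
        \<forall>x. f x \<bullet> k = (\<Sum>i\<in>Basis. \<Sum>j\<in>Basis. A i j * (x \<bullet> i) * (x \<bullet> j)))"

definition pderiv_dir :: "('a::real_normed_vector \<Rightarrow> 'b::real_normed_vector) \<Rightarrow> 'a \<Rightarrow> 'a \<Rightarrow> 'b" where
  "pderiv_dir f v x = frechet_derivative f (at x) v"

definition twice_differentiable :: "('a::euclidean_space \<Rightarrow> 'b::euclidean_space) \<Rightarrow> bool" where
  "twice_differentiable f \<longleftrightarrow>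
     (\<forall>x. f differentiable (at x)) \<and>
     (\<forall>i\<in>Basis. \<forall>x. (pderiv_dir f i) differentiable (at x))"

definition harmonic_map :: "('a::euclidean_space \<Rightarrow> 'b::euclidean_space) \<Rightarrow> bool" where
  "harmonic_map f \<longleftrightarrow>
     (\<forall>k\<in>Basis. \<forall>x.
        (\<Sum>i\<in>Basis. pderiv_dir (pderiv_dir (\<lambda>z. f z \<bullet> k) i) i x) = 0)"

definition horizontally_weakly_conformal :: "('a::euclidean_space \<Rightarrow> 'b::euclidean_space) \<Rightarrow> bool" where
  "horizontally_weakly_conformal f \<longleftrightarrow>
     (\<exists>lam::'a \<Rightarrow> real. \<forall>x. \<forall>k\<in>Basis. \<forall>l\<in>Basis.
        (\<Sum>i\<in>Basis. (pderiv_dir f i x \<bullet> k) * (pderiv_dir f i x \<bullet> l))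
          = (lam x)\<^sup>2 * (if k = l then 1 else 0))"

text \<open>Harmonic morphism, via the (Fuglede--Ishihara) characterization given in the
  context: a (twice differentiable) map that is harmonic and horizontally weakly conformal.\<close>
definition harmonic_morphism :: "('a::euclidean_space \<Rightarrow> 'b::euclidean_space) \<Rightarrow> bool" where
  "harmonic_morphism f \<longleftrightarrow>
     twice_differentiable f \<and> harmonic_map f \<and> horizontally_weakly_conformal f"

end

theory Submission imports Defs begin

definition QF :: "('a::euclidean_space \<Rightarrow> 'a \<Rightarrow> real) \<Rightarrow> 'a \<Rightarrow> real" where
  "QF A x = (\<Sum>i\<in>Basis. \<Sum>j\<in>Basis. A i j * (x \<bullet> i) * (x \<bullet> j))"

definition BF :: "('a::euclidean_space \<Rightarrow> 'a \<Rightarrow> real) \<Rightarrow> 'a \<Rightarrow> 'a \<Rightarrow> real" where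
  "BF A x y = (\<Sum>i\<in>Basis. \<Sum>j\<in>Basis. A i j * ((y \<bullet> i) * (x \<bullet> j) + (x \<bullet> i) * (y \<bullet> j)))"

lemma QF_deriv: "(QF A has_derivative BF A x) (at x)"
  unfolding QF_def BF_def
  by (auto intro!: derivative_eq_intros simp: algebra_simps)

lemma BF_deriv:
  assumes "(f has_derivative f') (at z)" "(g has_derivative g') (at z)"
  shows "((\<lambda>z. BF A (f z) (g z)) has_derivative (\<lambda>h. BF A (f' h) (g z) + BF A (f z) (g' h))) (at z)"
  unfolding BF_def
  by (auto intro!: derivative_eq_intros assms simp: algebra_simps sum.distrib[symmetric] sum_distrib_left)

lemma BF_sym: "BF A x y = BF A y x"
  unfolding BF_def by (simp add: algebra_simps)

lemma BF_0[simp]: "BF A 0 y = 0" "BF A x 0 = 0"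
  unfolding BF_def by simp_all

lemma inner_sum_Basis2: "(k::'a::euclidean_space) \<in> Basis \<Longrightarrow> (\<Sum>j\<in>Basis. c j *\<^sub>R j) \<bullet> k = c k"
  by (simp add: inner_sum_left inner_Basis if_distrib sum.delta cong: if_cong)

lemma sum_Basis_prod_real:
  fixes f::"('a::euclidean_space*'b::euclidean_space)\<Rightarrow>real"
  shows "sum f Basis = sum (\<lambda>i. f (i, 0)) Basis + sum (\<lambda>i. f (0, i)) Basis"
proof -
  have "inj_on (\<lambda>u. (u::'a, 0::'b)) Basis" "inj_on (\<lambda>u. (0::'a, u::'b)) Basis"
    by (auto intro!: inj_onI Pair_inject)
  thus ?thesis
    unfolding Basis_prod_def
    by (subst sum.union_disjoint) (auto simp: Basis_prod_def sum.reindex)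
qed

lemma pderiv_dir_eq: "(f has_derivative f') (at x) \<Longrightarrow> pderiv_dir f v x = f' v"
  unfolding pderiv_dir_def using frechet_derivative_at by metis


lemma Psi_deriv:
  "((\<lambda>z. \<Sum>k\<in>Basis. BF (AA k) (fst z) (snd z) *\<^sub>R (k::'b::euclidean_space)) has_derivative
     (\<lambda>h. \<Sum>k\<in>Basis. (BF (AA k) (fst h) (snd z) + BF (AA k) (fst z) (snd h)) *\<^sub>R k)) (at (z::'a::euclidean_space*'a))"
  by (intro has_derivative_sum has_derivative_scaleR_left BF_deriv has_derivative_fst has_derivative_snd has_derivative_ident)

lemma Psi_comp_deriv:
  "((\<lambda>z. BF A (fst z) (snd z)) has_derivative
     (\<lambda>h. (BF A (fst h) (snd z) + BF A (fst z) (snd h)))) (at (z::'a::euclidean_space*'a))"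
  by (intro BF_deriv has_derivative_fst has_derivative_snd has_derivative_ident)

lemma pd_deriv:
  "((\<lambda>z. BF A (fst I) (snd z) + BF A (fst z) (snd I)) has_derivative
     (\<lambda>h. (BF A (fst I) (snd h) + BF A (fst h) (snd I)))) (at (z::'a::euclidean_space*'a))"
proof -
  have "((\<lambda>z. BF A (fst I) (snd z) + BF A (fst z) (snd I)) has_derivative
     (\<lambda>h. (BF A (fst 0) (snd z) + BF A (fst I) (snd h)) + (BF A (fst h) (snd I) + BF A (fst z) (snd 0)))) (at z)"
    by (intro has_derivative_add BF_deriv has_derivative_fst has_derivative_snd has_derivative_ident has_derivative_fst[OF has_derivative_const] has_derivative_snd[OF has_derivative_const]) (simp_all add: has_derivative_const)
  then show ?thesis by simp
qed

theorem theorem3p3: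
  fixes \<phi> :: "real^'m \<Rightarrow> real^'n"
  assumes "quadratic_map \<phi>" and "harmonic_morphism \<phi>"
  shows "quadratic_map (\<lambda>(x, y). jacobian \<phi> (at x) *v y)
       \<and> harmonic_morphism (\<lambda>(x, y). jacobian \<phi> (at x) *v y)"
proof -
  obtain AA where AA: "\<And>k x. k \<in> Basis \<Longrightarrow> \<phi> x \<bullet> k = QF (AA k) x"
    using assms(1) unfolding quadratic_map_def QF_def by (metis (no_types))
  obtain lam where lam: "\<And>x k l. k \<in> Basis \<Longrightarrow> l \<in> Basis \<Longrightarrow>
        (\<Sum>i\<in>Basis. (pderiv_dir \<phi> i x \<bullet> k) * (pderiv_dir \<phi> i x \<bullet> l))
          = (lam x)\<^sup>2 * (if k = l then 1 else 0)"
    using assms(2) unfolding harmonic_morphism_def horizontally_weakly_conformal_def by blast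
  have phi_eq: "\<phi> = (\<lambda>x. \<Sum>k\<in>Basis. QF (AA k) x *\<^sub>R k)"
  proof
    fix x show "\<phi> x = (\<Sum>k\<in>Basis. QF (AA k) x *\<^sub>R k)"
      by (subst euclidean_representation[symmetric, of "\<phi> x"]) (simp add: AA)
  qed
  have phi_d: "(\<phi> has_derivative (\<lambda>h. \<Sum>k\<in>Basis. BF (AA k) x h *\<^sub>R k)) (at x)" for x
    unfolding phi_eq by (intro has_derivative_sum has_derivative_scaleR_left QF_deriv)
  define \<Psi> where "\<Psi> = (\<lambda>z::(real^'m)*(real^'m). \<Sum>k\<in>Basis. BF (AA k) (fst z) (snd z) *\<^sub>R (k::real^'n))"
  have Phi_eq: "(\<lambda>(x, y). jacobian \<phi> (at x) *v y) = \<Psi>"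
  proof
    fix z :: "(real^'m)*(real^'m)"
    obtain x y where z: "z = (x,y)" by fastforce
    have "\<phi> differentiable (at x)" using phi_d differentiable_def by blast
    then have "(\<phi> has_derivative (\<lambda>h. jacobian \<phi> (at x) *v h)) (at x)"
      using jacobian_works by blast
    then have "(\<lambda>h. jacobian \<phi> (at x) *v h) = (\<lambda>h. \<Sum>k\<in>Basis. BF (AA k) x h *\<^sub>R k)"
      using phi_d has_derivative_unique by blast
    then show "(case z of (x, y) \<Rightarrow> jacobian \<phi> (at x) *v y) = \<Psi> z"
      unfolding z \<Psi>_def by (simp add: fun_eq_iff)
  qed
  have Psi_k: "\<Psi> z \<bullet> k = BF (AA k) (fst z) (snd z)" if "k \<in> Basis" for z k
    unfolding \<Psi>_def using that by (simp add: inner_sum_Basis2)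
  have Psi_d: "(\<Psi> has_derivative (\<lambda>h. \<Sum>k\<in>Basis. (BF (AA k) (fst h) (snd z) + BF (AA k) (fst z) (snd h)) *\<^sub>R k)) (at z)" for z
    unfolding \<Psi>_def by (rule Psi_deriv)
  have pdPsi: "pderiv_dir \<Psi> I = (\<lambda>z. \<Sum>k\<in>Basis. (BF (AA k) (fst I) (snd z) + BF (AA k) (fst z) (snd I)) *\<^sub>R k)" for I
    using pderiv_dir_eq[OF Psi_d] by (simp add: fun_eq_iff)
  have quad: "quadratic_map \<Psi>"
    unfolding quadratic_map_def
  proof (intro ballI exI allI)
    fix K :: "real^'n" and z :: "(real^'m)*(real^'m)"
    assume K: "K \<in> Basis"
    let ?C = "\<lambda>I J. if snd I = 0 \<and> fst J = 0 then AA K (fst I) (snd J) + AA K (snd J) (fst I) else 0"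
    have "(\<Sum>I\<in>Basis. \<Sum>J\<in>Basis. ?C I J * (z \<bullet> I) * (z \<bullet> J))
        = (\<Sum>i\<in>Basis. \<Sum>j\<in>Basis. (AA K i j + AA K j i) * (fst z \<bullet> i) * (snd z \<bullet> j))"
      by (simp add: sum_Basis_prod_real inner_Pair_0 nonzero_Basis)
    also have "\<dots> = BF (AA K) (fst z) (snd z)"
      unfolding BF_def
      by (simp add: algebra_simps sum.distrib sum_distrib_left) (subst sum.swap, simp add: algebra_simps)
    finally show "\<Psi> z \<bullet> K = (\<Sum>I\<in>Basis. \<Sum>J\<in>Basis. ?C I J * (z \<bullet> I) * (z \<bullet> J))"
      using Psi_k[OF K] by simp
  qed
  have twice: "twice_differentiable \<Psi>"
    unfolding twice_differentiable_def
  proof (intro conjI ballI allI)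
    fix z show "\<Psi> differentiable (at z)" using Psi_d differentiable_def by blast
  next
    fix I :: "(real^'m)*(real^'m)" and z
    show "pderiv_dir \<Psi> I differentiable (at z)"
      unfolding pdPsi differentiable_def
      by (rule exI, rule has_derivative_sum, rule has_derivative_scaleR_left, rule pd_deriv)
  qed
  have harm: "harmonic_map \<Psi>"
    unfolding harmonic_map_def
  proof (intro ballI allI)
    fix K :: "real^'n" and z :: "(real^'m)*(real^'m)"
    assume K: "K \<in> Basis"
    have e1: "(\<lambda>z. \<Psi> z \<bullet> K) = (\<lambda>z. BF (AA K) (fst z) (snd z))"
      using Psi_k[OF K] by (simp add: fun_eq_iff)
    have e2: "pderiv_dir (\<lambda>z. BF (AA K) (fst z) (snd z)) I = (\<lambda>z. BF (AA K) (fst I) (snd z) + BF (AA K) (fst z) (snd I))" for I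
      by (rule ext, rule pderiv_dir_eq[OF Psi_comp_deriv])
    have e3: "pderiv_dir (\<lambda>z. BF (AA K) (fst I) (snd z) + BF (AA K) (fst z) (snd I)) I z = 0"
      if "I \<in> Basis" for I :: "(real^'m)*(real^'m)"
      proof -
      have "pderiv_dir (\<lambda>z. BF (AA K) (fst I) (snd z) + BF (AA K) (fst z) (snd I)) I z
          = BF (AA K) (fst I) (snd I) + BF (AA K) (fst I) (snd I)"
        by (rule pderiv_dir_eq[OF pd_deriv])
      also have "\<dots> = 0" using that by (auto simp: Basis_prod_def)
      finally show ?thesis .
    qed
    show "(\<Sum>I\<in>Basis. pderiv_dir (pderiv_dir (\<lambda>z. \<Psi> z \<bullet> K) I) I z) = 0"
      unfolding e1 e2 using e3 by simp
  qed
  have pdphi: "pderiv_dir \<phi> i x \<bullet> k = BF (AA k) x i" if "k \<in> Basis" for i x and k :: "real^'n"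
    using pderiv_dir_eq[OF phi_d] that by (simp add: inner_sum_Basis2)
  have conf: "horizontally_weakly_conformal \<Psi>"
    unfolding horizontally_weakly_conformal_def
  proof (intro exI allI ballI)
    fix z :: "(real^'m)*(real^'m)" and K L :: "real^'n"
    assume K: "K \<in> Basis" and L: "L \<in> Basis"
    have "(\<Sum>I\<in>Basis. (pderiv_dir \<Psi> I z \<bullet> K) * (pderiv_dir \<Psi> I z \<bullet> L))
       = (\<Sum>i\<in>Basis. BF (AA K) i (snd z) * BF (AA L) i (snd z)) + (\<Sum>i\<in>Basis. BF (AA K) (fst z) i * BF (AA L) (fst z) i)"
      unfolding pdPsi using K L by (simp add: inner_sum_Basis2 sum_Basis_prod_real)
    also have "\<dots> = (\<Sum>i\<in>Basis. (pderiv_dir \<phi> i (snd z) \<bullet> K) * (pderiv_dir \<phi> i (snd z) \<bullet> L))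
        + (\<Sum>i\<in>Basis. (pderiv_dir \<phi> i (fst z) \<bullet> K) * (pderiv_dir \<phi> i (fst z) \<bullet> L))"
      using K L by (simp add: pdphi BF_sym[of _ _ "snd z"])
    also have "\<dots> = ((lam (fst z))\<^sup>2 + (lam (snd z))\<^sup>2) * (if K = L then 1 else 0)"
      using K L by (simp add: lam algebra_simps)
    also have "\<dots> = (sqrt ((lam (fst z))\<^sup>2 + (lam (snd z))\<^sup>2))\<^sup>2 * (if K = L then 1 else 0)"
      by simp
    finally show "(\<Sum>I\<in>Basis. (pderiv_dir \<Psi> I z \<bullet> K) * (pderiv_dir \<Psi> I z \<bullet> L))
       = (sqrt ((lam (fst z))\<^sup>2 + (lam (snd z))\<^sup>2))\<^sup>2 * (if K = L then 1 else 0)" .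
  qed
  show ?thesis unfolding Phi_eq harmonic_morphism_def using quad twice harm conf by blast
qed

end
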